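(* Let $\mathcal{M}_1=(\Sigma,\Gamma,\mathcal{H}_1,U^{(1)},M^{(1)})$ and $\mathcal{M}_2=(\Sigma,\Gamma,\mathcal{H}_2,U^{(2)},M^{(2)})$ be QMMs with initial density operators $\rho_1,\rho_2$, $n_1=\dim\mathcal{H}_1$, $n_2=\dim\mathcal{H}_2$, $n=n_1^2+n_2^2$. Then $(\mathcal{M}_1,\rho_1)\sim(\mathcal{M}_2,\rho_2)$ if and only if there exist a complex $n\times n$ matrix $F$ and complex $n\times n$ matrices $A_c$ for each $c\in\Sigma\cup\Gamma$ such that: (1) the first column of $F$ is $\begin{bmatrix}\vec\rho_1\\ \vec\rho_2\end{bmatrix}$; (2) $\eta^\dagger F=0$, where $\eta=\begin{bmatrix}\eta_{n_1}\\ -\eta_{n_2}\end{bmatrix}$; (3) for every $c\in\Sigma$: $\begin{bmatrix}\hat U^{(1)}_c&0\\0&\hat U^{(2)}_c\end{bmatrix}F=FA_c$; (4) for every $c\in\Gamma$: $\begin{bmatrix}\hat M^{(1)}_c&0\\0&\hat M^{(2)}_c\end{bmatrix}F=FA_c$.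
   Context: A quantum Mealy machine (QMM) is a tuple $\mathcal{M}=(\Sigma,\Gamma,\mathcal{H},U,M)$ where $\Sigma,\Gamma$ are finite alphabets, $\mathcal{H}$ a finite-dimensional complex Hilbert space, $U=\{U_\sigma\}_{\sigma\in\Sigma}$ unitary operators on $\mathcal{H}$, $M=\{M_\gamma\}_{\gamma\in\Gamma}$ linear operators with $\sum_\gamma M_\gamma^\dagger M_\gamma=I$. For a word $a$, $|a|$ is its length, $a[l:r]=a[l]\cdots a[r]$ (empty if $l>r$), $U_a=U_{a[|a|]}\cdots U_{a[1]}$, $U_\epsilon=I$. A scheduler for $a\in\Sigma^*$ is a finite non-decreasing integer sequence $\mathcal{S}=(s_1\le\dots\le s_{|\mathcal{S}|})$ in $\{0,\dots,|a|\}$ (possibly empty). With $s_0=0$, $s_{|\mathcal{S}|+1}=|a|$, $a_i=a[s_{i-1}+1:s_i]$. For $b\in\Gamma^{|\mathcal{S}|}$, $V_{b|a,\mathcal{S}}=U_{a_{|\mathcal{S}|+1}}M_{b_{|\mathcal{S}|}}U_{a_{|\mathcal{S}|}}\cdots M_{b_1}U_{a_1}$ and $\Pr^{\mathcal{M}}_\rho(b|a,\mathcal{S})=\operatorname{tr}(V_{b|a,\mathcal{S}}\rho V_{b|a,\mathcal{S}}^\dagger)$. $(\mathcal{M}_1,\rho_1)\sim(\mathcal{M}_2,\rho_2)$ means $\Pr^{\mathcal{M}_1}_{\rho_1}(b|a,\mathcal{S})=\Pr^{\mathcal{M}_2}_{\rho_2}(b|a,\mathcal{S})$ for all $a\in\Sigma^*$,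 schedulers $\mathcal{S}$ for $a$, and $b\in\Gamma^{|\mathcal{S}|}$. For a $d\times d$ matrix $\rho$, its vectorization $\vec\rho\in\mathbb{C}^{d^2}$ has entries $\vec\rho_{(i-1)d+j}=\rho_{ij}$; for a $d\times d$ matrix $A$, $\hat A$ is the $d^2\times d^2$ matrix with $\hat A_{(i-1)d+j,(x-1)d+y}=A_{ix}\overline{A_{jy}}$ (so $\overrightarrow{A\rho A^\dagger}=\hat A\vec\rho$); $\eta_d\in\mathbb{C}^{d^2}$ is the vectorization of the trace, $(\eta_d)_{(i-1)d+j}=\delta_{ij}$ (so $\operatorname{tr}\rho=\eta_d^\dagger\vec\rho$). *)

theory Defs
  imports "Jordan_Normal_Form.Matrix" Complex_Main
begin

definition dagger :: "complex mat \<Rightarrow> complex mat" where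
  "dagger A = mat (dim_col A) (dim_row A) (\<lambda>(i,j). cnj (A $$ (j,i)))"

definition mtrace :: "complex mat \<Rightarrow> complex" where
  "mtrace A = (\<Sum>i<dim_row A. A $$ (i,i))"

definition unitary_mat :: "nat \<Rightarrow> complex mat \<Rightarrow> bool" where
  "unitary_mat d U \<longleftrightarrow> U \<in> carrier_mat d d \<and> dagger U * U = 1\<^sub>m d \<and> U * dagger U = 1\<^sub>m d"

definition density_op :: "nat \<Rightarrow> complex mat \<Rightarrow> bool" where
  "density_op d \<rho> \<longleftrightarrow> \<rho> \<in> carrier_mat d d \<and>
     (\<forall>v \<in> carrier_vec d. Im (conjugate v \<bullet> (\<rho> *\<^sub>v v)) = 0 \<and> Re (conjugate v \<bullet> (\<rho> *\<^sub>v v)) \<ge> 0) \<and>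
     mtrace \<rho> = 1"

definition is_QMM :: "'a set \<Rightarrow> 'b set \<Rightarrow> nat \<Rightarrow> ('a \<Rightarrow> complex mat) \<Rightarrow> ('b \<Rightarrow> complex mat) \<Rightarrow> bool" where
  "is_QMM Sig Gam d U M \<longleftrightarrow> finite Sig \<and> finite Gam \<and>
     (\<forall>\<sigma>\<in>Sig. unitary_mat d (U \<sigma>)) \<and>
     (\<forall>\<gamma>\<in>Gam. M \<gamma> \<in> carrier_mat d d) \<and>
     mat d d (\<lambda>(i,j). \<Sum>\<gamma>\<in>Gam. (dagger (M \<gamma>) * M \<gamma>) $$ (i,j)) = 1\<^sub>m d"

definition U_word :: "nat \<Rightarrow> ('a \<Rightarrow> complex mat) \<Rightarrow> 'a list \<Rightarrow> complex mat" where
  "U_word d U w = foldl (\<lambda>acc \<sigma>. U \<sigma> * acc) (1\<^sub>m d) w"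

(* a[l:r] with 1-based indices, empty if l > r *)
definition subword :: "'a list \<Rightarrow> nat \<Rightarrow> nat \<Rightarrow> 'a list" where
  "subword a l r = drop (l - 1) (take r a)"

definition is_scheduler :: "'a list \<Rightarrow> nat list \<Rightarrow> bool" where
  "is_scheduler a S \<longleftrightarrow> sorted S \<and> (\<forall>s \<in> set S. s \<le> length a)"

definition segments :: "'a list \<Rightarrow> nat list \<Rightarrow> 'a list list" where
  "segments a S = (let bs = 0 # S @ [length a] in
      map (\<lambda>i. subword a (bs ! i + 1) (bs ! (i + 1))) [0..<length S + 1])"

(* V_{b|a,S} = U_{a_{|S|+1}} M_{b_|S|} U_{a_|S|} ... M_{b_1} U_{a_1} *)
definition V_op :: "nat \<Rightarrow> ('a \<Rightarrow> complex mat) \<Rightarrow> ('b \<Rightarrow> complex mat) \<Rightarrow> 'b list \<Rightarrow> 'a list \<Rightarrow> nat list \<Rightarrow> complex mat" where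
  "V_op d U M b a S = (let segs = segments a S in
     foldl (\<lambda>acc (g, w). U_word d U w * M g * acc) (U_word d U (hd segs)) (zip b (tl segs)))"

definition Pr_QMM :: "nat \<Rightarrow> ('a \<Rightarrow> complex mat) \<Rightarrow> ('b \<Rightarrow> complex mat) \<Rightarrow> complex mat \<Rightarrow> 'b list \<Rightarrow> 'a list \<Rightarrow> nat list \<Rightarrow> complex" where
  "Pr_QMM d U M \<rho> b a S = (let V = V_op d U M b a S in mtrace (V * \<rho> * dagger V))"

definition QMM_equiv :: "'a set \<Rightarrow> 'b set \<Rightarrow> nat \<Rightarrow> ('a \<Rightarrow> complex mat) \<Rightarrow> ('b \<Rightarrow> complex mat) \<Rightarrow> complex mat
     \<Rightarrow> nat \<Rightarrow> ('a \<Rightarrow> complex mat) \<Rightarrow> ('b \<Rightarrow> complex mat) \<Rightarrow> complex mat \<Rightarrow> bool" where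
  "QMM_equiv Sig Gam d1 U1 M1 \<rho>1 d2 U2 M2 \<rho>2 \<longleftrightarrow>
     (\<forall>a \<in> lists Sig. \<forall>S. is_scheduler a S \<longrightarrow>
        (\<forall>b \<in> lists Gam. length b = length S \<longrightarrow>
           Pr_QMM d1 U1 M1 \<rho>1 b a S = Pr_QMM d2 U2 M2 \<rho>2 b a S))"

(* vectorization: entry (i-1)d+j is rho_ij (0-based: i*d+j) *)
definition vectorize :: "nat \<Rightarrow> complex mat \<Rightarrow> complex vec" where
  "vectorize d \<rho> = vec (d * d) (\<lambda>k. \<rho> $$ (k div d, k mod d))"

(* hat A with hat A_{(i,j),(x,y)} = A_ix * conj(A_jy) *)
definition hat_mat :: "nat \<Rightarrow> complex mat \<Rightarrow> complex mat" where
  "hat_mat d A = mat (d * d) (d * d)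
     (\<lambda>(r, c). A $$ (r div d, c div d) * cnj (A $$ (r mod d, c mod d)))"

(* eta_d: vectorization of the trace functional *)
definition eta_vec :: "nat \<Rightarrow> complex vec" where
  "eta_vec d = vec (d * d) (\<lambda>k. if k div d = k mod d then 1 else 0)"

end

theory Submission
  imports Defs "Jordan_Normal_Form.VS_Connect"
begin


lemma seg_len: "length (segments a S) = Suc (length S)"
  by (simp add: segments_def Let_def)

lemma seg_snocS: "segments a (S @ [length a]) = segments a S @ [[]]"
proof -
  define bs where "bs = 0 # S"
  have lb: "length bs = Suc (length S)" by (simp add: bs_def)
  have "segments a (S @ [length a]) = map (\<lambda>i. subword a ((bs @ [length a, length a]) ! i + 1) ((bs @ [length a, length a]) ! (i + 1))) ([0..<length S + 1] @ [length S + 1])"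
    by (simp add: segments_def Let_def bs_def)
  also have "\<dots> = map (\<lambda>i. subword a ((bs @ [length a]) ! i + 1) ((bs @ [length a]) ! (i + 1))) [0..<length S + 1] @ [[]]"
    using lb by (auto simp: nth_append subword_def)
  also have "\<dots> = segments a S @ [[]]"
    by (simp add: segments_def Let_def bs_def)
  finally show ?thesis .
qed

lemma seg_snoca:
  assumes "\<forall>s\<in>set S. s \<le> length a"
  shows "segments (a @ [x]) S = butlast (segments a S) @ [last (segments a S) @ [x]]"
proof -
  define bs where "bs = 0 # S"
  have bsl: "\<forall>s\<in>set bs. s \<le> length a" using assms by (auto simp: bs_def)
  have lhs: "segments (a @ [x]) S = map (\<lambda>i. subword (a@[x]) ((bs @ [Suc (length a)]) ! i + 1) ((bs @ [Suc (length a)]) ! (i + 1))) ([0..<length S] @ [length S])"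
    by (simp add: segments_def Let_def bs_def)
  have rhs: "segments a S = map (\<lambda>i. subword a ((bs @ [length a]) ! i + 1) ((bs @ [length a]) ! (i + 1))) ([0..<length S] @ [length S])"
    by (simp add: segments_def Let_def bs_def)
  have lb: "length bs = Suc (length S)" by (simp add: bs_def)
  have A: "map (\<lambda>i. subword (a @ [x]) ((bs @ [Suc (length a)]) ! i + 1) ((bs @ [Suc (length a)]) ! (i + 1))) [0..<length S] =
    map (\<lambda>i. subword a ((bs @ [length a]) ! i + 1) ((bs @ [length a]) ! (i + 1))) [0..<length S]"
  proof (rule map_cong[OF refl])
    fix i assume "i \<in> set [0..<length S]"
    then have i: "i < length S" by simp
    have "bs ! Suc i \<le> length a" using bsl lb i by (metis Suc_mono nth_mem)
    then show "subword (a @ [x]) ((bs @ [Suc (length a)]) ! i + 1) ((bs @ [Suc (length a)]) ! (i + 1)) =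
       subword a ((bs @ [length a]) ! i + 1) ((bs @ [length a]) ! (i + 1))"
      using i lb by (simp add: nth_append subword_def)
  qed
  have "bs ! length S \<le> length a" using bsl lb by (metis lessI nth_mem)
  then have B: "subword (a @ [x]) ((bs @ [Suc (length a)]) ! length S + 1) ((bs @ [Suc (length a)]) ! (length S + 1)) =
    subword a ((bs @ [length a]) ! length S + 1) ((bs @ [length a]) ! (length S + 1)) @ [x]"
    using lb by (simp add: nth_append subword_def)
  show ?thesis unfolding lhs rhs map_append butlast_snoc last_snoc list.map A B ..
qed

definition segw :: "('b \<times> 'a list) list \<Rightarrow> ('a + 'b) list" where
  "segw ps = concat (map (\<lambda>(g,x). Inr g # map Inl x) ps)"

definition wordof :: "'a list \<Rightarrow> nat list \<Rightarrow> 'b list \<Rightarrow> ('a + 'b) list" where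
  "wordof a S b = map Inl (hd (segments a S)) @ segw (zip b (tl (segments a S)))"

lemma segw_snoc[simp]: "segw (ps @ [(g,x)]) = segw ps @ Inr g # map Inl x"
  by (simp add: segw_def)

lemma wordof_snocS:
  assumes "length b = length S"
  shows "wordof a (S @ [length a]) (b @ [g]) = wordof a S b @ [Inr g]"
proof -
  obtain y ys where sy: "segments a S = y # ys" using seg_len by (metis length_Suc_conv)
  have "length ys = length b" using seg_len[of a S] sy assms by simp
  then show ?thesis using sy by (simp add: wordof_def seg_snocS)
qed

lemma wordof_snoca:
  assumes "\<forall>s\<in>set S. s \<le> length a" "length b = length S"
  shows "wordof (a @ [x]) S b = wordof a S b @ [Inl x]"
proof -
  obtain y ys where sy: "segments a S = y # ys" using seg_len by (metis length_Suc_conv)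
  have lys: "length ys = length b" using seg_len[of a S] sy assms by simp
  show ?thesis
  proof (cases "ys = []")
    case True
    then show ?thesis using sy seg_snoca[OF assms(1), of x] lys by (simp add: wordof_def segw_def)
  next
    case False
    then obtain ys' z where ys: "ys = ys' @ [z]" by (metis rev_exhaust)
    then obtain b' h where b: "b = b' @ [h]" using lys by (metis length_0_conv rev_exhaust snoc_eq_iff_butlast)
    have "length ys' = length b'" using lys ys b by simp
    then show ?thesis using sy seg_snoca[OF assms(1), of x] ys b
      by (simp add: wordof_def butlast_append)
  qed
qed

lemma word_surj:
  assumes "w \<in> lists (Inl ` Sig \<union> Inr ` Gam)"
  shows "\<exists>a S b. a \<in> lists Sig \<and> is_scheduler a S \<and> b \<in> lists Gam \<and> length b = length S \<and> wordof a S b = w"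
  using assms
proof (induction w rule: rev_induct)
  case Nil
  have "wordof [] [] ([]::'b list) = ([] :: ('a+'b) list)"
    by (simp add: wordof_def segments_def subword_def segw_def)
  then show ?case by (intro exI[of _ "[]"], auto simp: is_scheduler_def)
next
  case (snoc c w)
  then obtain a S b where IH: "a \<in> lists Sig" "is_scheduler a S" "b \<in> lists Gam" "length b = length S" "wordof a S b = w"
    by auto
  have le: "\<forall>s\<in>set S. s \<le> length a" using IH(2) by (simp add: is_scheduler_def)
  show ?case
  proof (cases c)
    case (Inl x)
    then have "x \<in> Sig" using snoc.prems by auto
    moreover have "is_scheduler (a @ [x]) S" using IH(2) by (auto simp: is_scheduler_def)
    ultimately show ?thesis using IH wordof_snoca[OF le IH(4)] Inl
      by (intro exI[of _ "a @ [x]"] exI[of _ S] exI[of _ b]) auto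
  next
    case (Inr g)
    then have "g \<in> Gam" using snoc.prems by auto
    moreover have "is_scheduler a (S @ [length a])" using IH(2) le
      by (auto simp: is_scheduler_def sorted_append)
    ultimately show ?thesis using IH wordof_snocS[OF IH(4)] Inr
      by (intro exI[of _ a] exI[of _ "S @ [length a]"] exI[of _ "b @ [g]"]) auto
  qed
qed

lemma set_segments: "x \<in> set (segments a S) \<Longrightarrow> set x \<subseteq> set a"
  by (auto simp: segments_def Let_def subword_def dest: in_set_dropD in_set_takeD)

lemma wordof_lists:
  assumes "a \<in> lists Sig" "b \<in> lists Gam"
  shows "wordof a S b \<in> lists (Inl ` Sig \<union> Inr ` Gam)"
proof -
  obtain y ys where sy: "segments a S = y # ys" using seg_len by (metis length_Suc_conv)
  have "set y \<subseteq> Sig" using set_segments[of y a S] sy assms by auto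
  moreover have "\<forall>z\<in>set ys. set z \<subseteq> Sig" using set_segments[of _ a S] sy assms by fastforce
  moreover have "\<And>g x. (g,x) \<in> set (zip b ys) \<Longrightarrow> g \<in> Gam \<and> set x \<subseteq> Sig"
    using assms \<open>\<forall>z\<in>set ys. set z \<subseteq> Sig\<close> by (auto dest: set_zip_leftD set_zip_rightD)
  ultimately show ?thesis using sy
    by (fastforce simp: wordof_def segw_def)
qed

definition opL :: "('a \<Rightarrow> 'c) \<Rightarrow> ('b \<Rightarrow> 'c) \<Rightarrow> 'a + 'b \<Rightarrow> 'c" where
  "opL U M c = (case c of Inl s \<Rightarrow> U s | Inr g \<Rightarrow> M g)"

lemma opL_simps[simp]: "opL U M (Inl s) = U s" "opL U M (Inr g) = M g"
  by (simp_all add: opL_def)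

lemma UW_snoc: "U_word d U (w @ [c]) = U c * U_word d U w"
  by (simp add: U_word_def)

lemma UW_Nil[simp]: "U_word d U [] = 1\<^sub>m d"
  by (simp add: U_word_def)

lemma UW_carrier: "(\<And>c. c \<in> set w \<Longrightarrow> U c \<in> carrier_mat d d) \<Longrightarrow> U_word d U w \<in> carrier_mat d d"
  by (induction w rule: rev_induct) (auto simp: UW_snoc intro!: mult_carrier_mat)

lemma UW_append:
  assumes "\<And>c. c \<in> set xs \<union> set ys \<Longrightarrow> U c \<in> carrier_mat d d"
  shows "U_word d U (xs @ ys) = U_word d U ys * U_word d U xs"
  using assms
proof (induction ys rule: rev_induct)
  case Nil
  then show ?case using UW_carrier[of xs U d] by simp
next
  case (snoc c ys)
  have c: "U c \<in> carrier_mat d d" using snoc.prems by auto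
  have 1: "U_word d U ys \<in> carrier_mat d d" using UW_carrier[of ys U d] snoc.prems by auto
  have 2: "U_word d U xs \<in> carrier_mat d d" using UW_carrier[of xs U d] snoc.prems by auto
  have IH: "U_word d U (xs @ ys) = U_word d U ys * U_word d U xs"
    using snoc.IH snoc.prems by auto
  have "U_word d U (xs @ ys @ [c]) = U c * U_word d U (xs @ ys)"
    using UW_snoc[of d U "xs @ ys" c] by simp
  also have "\<dots> = U c * (U_word d U ys * U_word d U xs)" using IH by simp
  also have "\<dots> = U c * U_word d U ys * U_word d U xs"
    by (rule assoc_mult_mat[symmetric, OF c 1 2])
  also have "\<dots> = U_word d U (ys @ [c]) * U_word d U xs"
    by (simp only: UW_snoc)
  finally show ?case .
qed

lemma UW_map_Inl: "U_word d (opL U M) (map Inl x) = U_word d U x"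
  by (simp add: U_word_def foldl_map)

lemma V_foldl:
  assumes "\<And>s. s \<in> Sig \<Longrightarrow> U s \<in> carrier_mat d d" "\<And>g. g \<in> Gam \<Longrightarrow> M g \<in> carrier_mat d d"
    and "\<And>g x. (g,x) \<in> set ps \<Longrightarrow> g \<in> Gam \<and> set x \<subseteq> Sig" "X \<in> carrier_mat d d"
  shows "foldl (\<lambda>acc (g, w). U_word d U w * M g * acc) X ps = U_word d (opL U M) (segw ps) * X"
  using assms(3)
proof (induction ps rule: rev_induct)
  case Nil
  then show ?case using assms(4) by (simp add: segw_def)
next
  case (snoc p ps)
  obtain g x where p: "p = (g,x)" by fastforce
  have gx: "g \<in> Gam" "set x \<subseteq> Sig" using snoc.prems p by auto
  have seg: "set (segw ps) \<subseteq> Inl ` Sig \<union> Inr ` Gam"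
    using snoc.prems by (fastforce simp: segw_def)
  have car: "\<And>c. c \<in> Inl ` Sig \<union> Inr ` Gam \<Longrightarrow> opL U M c \<in> carrier_mat d d" using assms(1,2) by auto
  have 1: "U_word d (opL U M) (segw ps) \<in> carrier_mat d d" by (rule UW_carrier) (use seg car in blast)
  have 2: "U_word d U x \<in> carrier_mat d d" by (rule UW_carrier) (use gx assms(1) in blast)
  have Mg: "M g \<in> carrier_mat d d" using gx assms(2) by auto
  have IH: "foldl (\<lambda>acc (g, w). U_word d U w * M g * acc) X ps = U_word d (opL U M) (segw ps) * X"
    using snoc.IH snoc.prems by auto
  have "foldl (\<lambda>acc (g, w). U_word d U w * M g * acc) X (ps @ [p]) = U_word d U x * M g * (U_word d (opL U M) (segw ps) * X)"
    by (simp only: p foldl_append foldl.simps IH prod.case)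
  also have AB: "U_word d U x * M g \<in> carrier_mat d d" using 2 Mg by simp
  have "U_word d U x * M g * (U_word d (opL U M) (segw ps) * X) = (U_word d U x * M g * U_word d (opL U M) (segw ps)) * X"
    by (rule assoc_mult_mat[symmetric, OF AB 1 assms(4)])
  also have "U_word d U x * M g * U_word d (opL U M) (segw ps) = U_word d (opL U M) (segw (ps @ [p]))"
  proof -
    have "U_word d (opL U M) (segw (ps @ [p])) = U_word d (opL U M) ((segw ps @ [Inr g]) @ map Inl x)"
      by (simp only: p segw_snoc append_assoc append_Cons append_Nil)
    also have "\<dots> = U_word d (opL U M) (map Inl x) * U_word d (opL U M) (segw ps @ [Inr g])"
      by (rule UW_append, rule car) (use seg gx in auto)
    also have "\<dots> = U_word d U x * (M g * U_word d (opL U M) (segw ps))"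
      by (simp only: UW_map_Inl UW_snoc opL_simps)
    also have "\<dots> = U_word d U x * M g * U_word d (opL U M) (segw ps)"
      by (rule assoc_mult_mat[symmetric, OF 2 Mg 1])
    finally show ?thesis by simp
  qed
  finally show ?case .
qed

lemma V_op_word:
  assumes "\<And>s. s \<in> Sig \<Longrightarrow> U s \<in> carrier_mat d d" "\<And>g. g \<in> Gam \<Longrightarrow> M g \<in> carrier_mat d d"
    and "a \<in> lists Sig" "b \<in> lists Gam"
  shows "V_op d U M b a S = U_word d (opL U M) (wordof a S b)"
proof -
  obtain y ys where sy: "segments a S = y # ys" using seg_len by (metis length_Suc_conv)
  have ysig: "set y \<subseteq> Sig" using set_segments[of y a S] sy assms by auto
  have "\<forall>z\<in>set ys. set z \<subseteq> Sig" using set_segments[of _ a S] sy assms by fastforce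
  then have zz: "\<And>g x. (g,x) \<in> set (zip b ys) \<Longrightarrow> g \<in> Gam \<and> set x \<subseteq> Sig"
    using assms by (auto dest: set_zip_leftD set_zip_rightD)
  have car: "\<And>c. c \<in> Inl ` Sig \<union> Inr ` Gam \<Longrightarrow> opL U M c \<in> carrier_mat d d" using assms(1,2) by auto
  have seg: "set (segw (zip b ys)) \<subseteq> Inl ` Sig \<union> Inr ` Gam"
    using zz by (fastforce simp: segw_def)
  have uy: "U_word d U y \<in> carrier_mat d d" by (rule UW_carrier) (use ysig assms(1) in blast)
  have "V_op d U M b a S = U_word d (opL U M) (segw (zip b ys)) * U_word d U y"
    unfolding V_op_def Let_def sy list.sel using V_foldl[OF assms(1,2) zz uy] .
  also have "\<dots> = U_word d (opL U M) (map Inl y @ segw (zip b ys))"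
    by (subst UW_append, rule car) (use seg ysig in auto, simp only: UW_map_Inl)
  also have "\<dots> = U_word d (opL U M) (wordof a S b)"
    unfolding wordof_def sy list.sel ..
  finally show ?thesis .
qed



lemma divmod_lt: "i < (d::nat) \<Longrightarrow> j < d \<Longrightarrow> i*d+j < d*d"
proof -
  assume a: "i < d" "j < d"
  have "i*d + j < i*d + d" using a by simp
  also have "\<dots> = (Suc i)*d" by simp
  also have "\<dots> \<le> d*d" using a by (metis Suc_leI mult_le_mono1)
  finally show ?thesis .
qed

lemma sum_divmod:
  "(\<Sum>k<(d::nat)*d. f (k div d) (k mod d)) = (\<Sum>i<d. \<Sum>j<d. (f i j :: 'c :: comm_monoid_add))"
proof -
  have "(\<Sum>k<d*d. f (k div d) (k mod d)) = (\<Sum>(i,j)\<in>{..<d}\<times>{..<d}. f i j)"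
    apply (rule sum.reindex_bij_witness[of _ "\<lambda>(i,j). i*d+j" "\<lambda>k. (k div d, k mod d)"])
    apply (auto simp: divmod_lt less_mult_imp_div_less)
    by (metis mod_less_divisor mult_eq_0_iff not_gr_zero not_less_zero)
  also have "\<dots> = (\<Sum>i<d. \<Sum>j<d. f i j)" by (simp add: sum.cartesian_product)
  finally show ?thesis .
qed

lemma sum_divmod':
  "(\<Sum>k<(d::nat)*d. g k) = (\<Sum>i<d. \<Sum>j<d. (g (i*d+j) :: 'c :: comm_monoid_add))"
proof -
  have "(\<Sum>k<d*d. g k) = (\<Sum>k<d*d. g ((k div d)*d + k mod d))" by simp
  also have "\<dots> = (\<Sum>i<d. \<Sum>j<d. g (i*d+j))" by (rule sum_divmod)
  finally show ?thesis .
qed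

lemma dagger_carrier[simp]: "A \<in> carrier_mat m k \<Longrightarrow> dagger A \<in> carrier_mat k m"
  by (simp add: dagger_def)

lemma dagger_index[simp]: "A \<in> carrier_mat m k \<Longrightarrow> i < k \<Longrightarrow> j < m \<Longrightarrow> dagger A $$ (i,j) = cnj (A $$ (j,i))"
  by (simp add: dagger_def)

lemma hat_carrier[simp]: "hat_mat d A \<in> carrier_mat (d*d) (d*d)"
  by (simp add: hat_mat_def)

lemma vectorize_carrier[simp]: "vectorize d A \<in> carrier_vec (d*d)"
  by (simp add: vectorize_def)

lemma eta_carrier[simp]: "eta_vec d \<in> carrier_vec (d*d)"
  by (simp add: eta_vec_def)

lemma trace_vec:
  assumes A: "A \<in> carrier_mat d d" and R: "R \<in> carrier_mat d d"
  shows "mtrace (A * R * dagger A) = eta_vec d \<bullet> (hat_mat d A *\<^sub>v vectorize d R)"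
proof -
  have [simp]: "dim_row A = d" "dim_col A = d" "dim_row R = d" "dim_col R = d" using A R by auto
  have ifm: "\<And>P (x::complex). (if P then 1 else 0) * x = (if P then x else 0)" by simp
  have "mtrace (A * R * dagger A) = (\<Sum>i<d. \<Sum>y<d. (\<Sum>x<d. A $$ (i,x) * R $$ (x,y)) * cnj (A $$ (i,y)))"
    unfolding mtrace_def
  proof (rule sum.cong)
    show "{..<dim_row (A * R * dagger A)} = {..<d}" using A by simp
    fix i assume "i \<in> {..<d}"
    then show "(A * R * dagger A) $$ (i, i) = (\<Sum>y<d. (\<Sum>x<d. A $$ (i,x) * R $$ (x,y)) * cnj (A $$ (i,y)))"
      using A R by (simp add: scalar_prod_def atLeast0LessThan index_mult_mat row_def col_def dagger_def)
  qed
  also have "\<dots> = (\<Sum>i<d. \<Sum>x<d. \<Sum>y<d. A $$ (i,x) * cnj (A $$ (i,y)) * R $$ (x,y))"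
  proof (rule sum.cong[OF refl])
    fix i
    have "(\<Sum>y<d. (\<Sum>x<d. A $$ (i,x) * R $$ (x,y)) * cnj (A $$ (i,y))) = (\<Sum>y<d. \<Sum>x<d. A $$ (i,x) * cnj (A $$ (i,y)) * R $$ (x,y))"
      by (simp add: sum_distrib_left sum_distrib_right mult_ac)
    also have "\<dots> = (\<Sum>x<d. \<Sum>y<d. A $$ (i,x) * cnj (A $$ (i,y)) * R $$ (x,y))"
      by (rule sum.swap)
    finally show "(\<Sum>y<d. (\<Sum>x<d. A $$ (i,x) * R $$ (x,y)) * cnj (A $$ (i,y))) = (\<Sum>x<d. \<Sum>y<d. A $$ (i,x) * cnj (A $$ (i,y)) * R $$ (x,y))" .
  qed
  also have "\<dots> = (\<Sum>i<d. \<Sum>j<d. (if i = j then (\<Sum>x<d. \<Sum>y<d. A $$ (i,x) * cnj (A $$ (j,y)) * R $$ (x,y)) else 0))"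
    by simp
  also have "\<dots> = eta_vec d \<bullet> (hat_mat d A *\<^sub>v vectorize d R)"
    unfolding scalar_prod_def
    by (simp add: sum_divmod' eta_vec_def ifm hat_mat_def vectorize_def divmod_lt atLeast0LessThan
        scalar_prod_def row_def)
  finally show ?thesis .
qed

lemma divmod_bounds: "r < (d::nat) * d \<Longrightarrow> r div d < d \<and> r mod d < d"
  by (metis less_mult_imp_div_less mod_less_divisor mult_eq_0_iff not_gr_zero not_less_zero)

lemma hat_mult:
  assumes A: "A \<in> carrier_mat d d" and B: "B \<in> carrier_mat d d"
  shows "hat_mat d (A * B) = hat_mat d A * hat_mat d B"
proof (rule eq_matI)
  show "dim_row (hat_mat d (A * B)) = dim_row (hat_mat d A * hat_mat d B)"
    "dim_col (hat_mat d (A * B)) = dim_col (hat_mat d A * hat_mat d B)" by (simp_all add: hat_mat_def)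
  fix r s assume "r < dim_row (hat_mat d A * hat_mat d B)" "s < dim_col (hat_mat d A * hat_mat d B)"
  then have rs: "r < d*d" "s < d*d" by (simp_all add: hat_mat_def)
  define i j k l where "i = r div d" "j = r mod d" "k = s div d" "l = s mod d"
  have b: "i < d" "j < d" "k < d" "l < d" using divmod_bounds rs by (auto simp: i_j_k_l_def)
  have [simp]: "dim_row A = d" "dim_col A = d" "dim_row B = d" "dim_col B = d" using A B by auto
  have "hat_mat d (A * B) $$ (r, s) = (\<Sum>x<d. A $$ (i,x) * B $$ (x,k)) * cnj (\<Sum>y<d. A $$ (j,y) * B $$ (y,l))"
    using rs b by (simp add: hat_mat_def i_j_k_l_def scalar_prod_def atLeast0LessThan)
  also have "\<dots> = (\<Sum>x<d. \<Sum>y<d. (A $$ (i,x) * cnj (A $$ (j,y))) * (B $$ (x,k) * cnj (B $$ (y,l))))"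
    by (simp add: sum_product mult_ac)
  also have "\<dots> = (\<Sum>c<d*d. (A $$ (i,c div d) * cnj (A $$ (j,c mod d))) * (B $$ (c div d,k) * cnj (B $$ (c mod d,l))))"
    using sum_divmod[where d=d and f="\<lambda>x y. (A $$ (i,x) * cnj (A $$ (j,y))) * (B $$ (x,k) * cnj (B $$ (y,l)))"] by simp
  also have "\<dots> = (hat_mat d A * hat_mat d B) $$ (r, s)"
    using rs b by (simp add: hat_mat_def i_j_k_l_def scalar_prod_def atLeast0LessThan)
  finally show "hat_mat d (A * B) $$ (r, s) = (hat_mat d A * hat_mat d B) $$ (r, s)" .
qed

lemma hat_one: "hat_mat d (1\<^sub>m d) = 1\<^sub>m (d*d)"
proof (rule eq_matI)
  fix r s assume "r < dim_row (1\<^sub>m (d*d))" "s < dim_col (1\<^sub>m (d*d) :: complex mat)"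
  then have rs: "r < d*d" "s < d*d" by simp_all
  have "(r div d = s div d \<and> r mod d = s mod d) \<longleftrightarrow> r = s"
    by (metis div_mult_mod_eq)
  then show "hat_mat d (1\<^sub>m d) $$ (r, s) = 1\<^sub>m (d * d) $$ (r, s)"
    using rs divmod_bounds[OF rs(1)] divmod_bounds[OF rs(2)] by (auto simp: hat_mat_def)
qed (simp_all add: hat_mat_def)

lemma hat_UW:
  assumes "\<And>c. c \<in> set w \<Longrightarrow> U c \<in> carrier_mat d d"
  shows "hat_mat d (U_word d U w) = U_word (d*d) (\<lambda>c. hat_mat d (U c)) w"
  using assms
proof (induction w rule: rev_induct)
  case Nil
  then show ?case by (simp add: U_word_def hat_one)
next
  case (snoc c w)
  have "U_word d U w \<in> carrier_mat d d"
    by (rule UW_carrier) (use snoc.prems in auto)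
  then show ?case using snoc by (simp add: U_word_def hat_mult)
qed



lemma block_UW:
  assumes H1: "\<And>c. H1 c \<in> carrier_mat N1 N1" and H2: "\<And>c. H2 c \<in> carrier_mat N2 N2"
  shows "U_word (N1+N2) (\<lambda>c. four_block_mat (H1 c) (0\<^sub>m N1 N2) (0\<^sub>m N2 N1) (H2 c)) w =
         four_block_mat (U_word N1 H1 w) (0\<^sub>m N1 N2) (0\<^sub>m N2 N1) (U_word N2 H2 w)"
proof (induction w rule: rev_induct)
  case Nil show ?case by simp
next
  case (snoc c w)
  have a: "U_word N1 H1 w \<in> carrier_mat N1 N1" by (rule UW_carrier) (use H1 in auto)
  have b: "U_word N2 H2 w \<in> carrier_mat N2 N2" by (rule UW_carrier) (use H2 in auto)
  have c1: "H1 c \<in> carrier_mat N1 N1" "H2 c \<in> carrier_mat N2 N2" using H1 H2 by auto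
  show ?case unfolding UW_snoc snoc.IH
    by (subst mult_four_block_mat[OF c1(1) zero_carrier_mat zero_carrier_mat c1(2) a zero_carrier_mat zero_carrier_mat b])
      (use a b c1 in simp)
qed

lemma eta_vectorize:
  assumes R: "R \<in> carrier_mat d d"
  shows "eta_vec d \<bullet> vectorize d R = mtrace R"
proof -
  have "eta_vec d \<bullet> vectorize d R = (\<Sum>k<d*d. (\<lambda>i j. (if i = j then 1 else 0) * R $$ (i,j)) (k div d) (k mod d))"
    by (simp add: scalar_prod_def eta_vec_def vectorize_def atLeast0LessThan)
  also have "\<dots> = (\<Sum>i<d. \<Sum>j<d. (if i = j then 1 else 0) * R $$ (i,j))"
    by (rule sum_divmod)
  also have "\<dots> = (\<Sum>i<d. \<Sum>j<d. (if i = j then R $$ (i,j) else 0))"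
    by (simp add: if_distrib[of "\<lambda>x. x * _"] cong: if_cong)
  also have "\<dots> = mtrace R" using R by (simp add: mtrace_def)
  finally show ?thesis .
qed

lemma cnj_eta: "k < d*d \<Longrightarrow> cnj (eta_vec d $ k) = eta_vec d $ k"
  by (simp add: eta_vec_def)

lemma dagger_row_zero:
  assumes e: "e \<in> carrier_vec n" and re: "\<And>k. k < n \<Longrightarrow> cnj (e $ k) = e $ k"
    and F: "F \<in> carrier_mat n m"
  shows "dagger (mat_of_cols n [e]) * F = 0\<^sub>m 1 m \<longleftrightarrow> (\<forall>j<m. e \<bullet> col F j = 0)"
proof -
  have D: "dagger (mat_of_cols n [e]) \<in> carrier_mat 1 n" by (simp add: dagger_def)
  have r: "row (dagger (mat_of_cols n [e])) 0 = e"
    using e re by (intro eq_vecI) (auto simp: dagger_def mat_of_cols_index)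
  have idx: "\<And>j. j < m \<Longrightarrow> (dagger (mat_of_cols n [e]) * F) $$ (0, j) = e \<bullet> col F j"
    using D F r by (simp add: index_mult_mat)
  show ?thesis
  proof
    assume a: "dagger (mat_of_cols n [e]) * F = 0\<^sub>m 1 m"
    show "\<forall>j<m. e \<bullet> col F j = 0"
    proof (intro allI impI)
      fix j assume j: "j < m"
      have "(dagger (mat_of_cols n [e]) * F) $$ (0, j) = 0" using a j by simp
      then show "e \<bullet> col F j = 0" using idx[OF j] by simp
    qed
  next
    assume z: "\<forall>j<m. e \<bullet> col F j = 0"
    show "dagger (mat_of_cols n [e]) * F = 0\<^sub>m 1 m"
      by (rule eq_matI) (use D F idx z in auto)
  qed
qed

lemma scalar_zero_cols:
  assumes e: "e \<in> carrier_vec n" and F: "F \<in> carrier_mat n m" and y: "y \<in> carrier_vec m"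
    and z: "\<forall>j<m. e \<bullet> col F j = 0"
  shows "e \<bullet> (F *\<^sub>v y) = 0"
proof -
  have "e \<bullet> (F *\<^sub>v y) = e \<bullet> vec n (\<lambda>i. row F i \<bullet> y)" using F by (simp add: mult_mat_vec_def)
  also have "\<dots> = vec m (\<lambda>j. e \<bullet> col F j) \<bullet> y" using assoc_scalar_prod[OF e F y] by simp
  also have "vec m (\<lambda>j. e \<bullet> col F j) = 0\<^sub>v m" using z by auto
  finally show ?thesis using y by simp
qed



lemma moc_carrier: "mat_of_cols n (map f [0..<n]) \<in> carrier_mat n n"
  by (metis diff_zero length_map length_upt mat_of_cols_carrier(1))

theorem propositionC1:
  fixes Sig :: "'a set" and Gam :: "'b set"
    and n1 n2 :: nat
    and U1 U2 :: "'a \<Rightarrow> complex mat" and M1 M2 :: "'b \<Rightarrow> complex mat"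
    and \<rho>1 \<rho>2 :: "complex mat"
  assumes "is_QMM Sig Gam n1 U1 M1" and "is_QMM Sig Gam n2 U2 M2"
    and "density_op n1 \<rho>1" and "density_op n2 \<rho>2"
  defines "n \<equiv> n1^2 + n2^2"
  shows "QMM_equiv Sig Gam n1 U1 M1 \<rho>1 n2 U2 M2 \<rho>2 \<longleftrightarrow>
    (\<exists>(F :: complex mat) (A :: 'a + 'b \<Rightarrow> complex mat).
       F \<in> carrier_mat n n \<and> (\<forall>c \<in> Inl ` Sig \<union> Inr ` Gam. A c \<in> carrier_mat n n) \<and>
       col F 0 = vectorize n1 \<rho>1 @\<^sub>v vectorize n2 \<rho>2 \<and>
       dagger (mat_of_cols n [eta_vec n1 @\<^sub>v (- eta_vec n2)]) * F = 0\<^sub>m 1 n \<and>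
       (\<forall>c \<in> Sig. four_block_mat (hat_mat n1 (U1 c)) (0\<^sub>m (n1^2) (n2^2))
                                    (0\<^sub>m (n2^2) (n1^2)) (hat_mat n2 (U2 c)) * F = F * A (Inl c)) \<and>
       (\<forall>c \<in> Gam. four_block_mat (hat_mat n1 (M1 c)) (0\<^sub>m (n1^2) (n2^2))
                                    (0\<^sub>m (n2^2) (n1^2)) (hat_mat n2 (M2 c)) * F = F * A (Inr c)))"
proof -
  have U1c: "\<And>s. s \<in> Sig \<Longrightarrow> U1 s \<in> carrier_mat n1 n1" using assms(1) by (auto simp: is_QMM_def unitary_mat_def)
  have M1c: "\<And>g. g \<in> Gam \<Longrightarrow> M1 g \<in> carrier_mat n1 n1" using assms(1) by (auto simp: is_QMM_def)
  have U2c: "\<And>s. s \<in> Sig \<Longrightarrow> U2 s \<in> carrier_mat n2 n2" using assms(2) by (auto simp: is_QMM_def unitary_mat_def)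
  have M2c: "\<And>g. g \<in> Gam \<Longrightarrow> M2 g \<in> carrier_mat n2 n2" using assms(2) by (auto simp: is_QMM_def)
  have R1: "\<rho>1 \<in> carrier_mat n1 n1" "mtrace \<rho>1 = 1" using assms(3) by (auto simp: density_op_def)
  have R2: "\<rho>2 \<in> carrier_mat n2 n2" "mtrace \<rho>2 = 1" using assms(4) by (auto simp: density_op_def)
  define Alph where "Alph = Inl ` Sig \<union> Inr ` Gam"
  define N1 where "N1 = n1 * n1"
  define N2 where "N2 = n2 * n2"
  have nN: "n = N1 + N2" unfolding n_def N1_def N2_def by (simp add: power2_eq_square)
  have n1pos: "n1 > 0"
  proof (rule ccontr)
    assume "\<not> n1 > 0"
    then have "n1 = 0" by simp
    then show False using R1 by (simp add: mtrace_def)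
  qed
  have npos: "n > 0" using n1pos nN N1_def by simp
  define H1 where "H1 = (\<lambda>c. hat_mat n1 (opL U1 M1 c))"
  define H2 where "H2 = (\<lambda>c. hat_mat n2 (opL U2 M2 c))"
  define Bc where "Bc = (\<lambda>c. four_block_mat (H1 c) (0\<^sub>m N1 N2) (0\<^sub>m N2 N1) (H2 c))"
  define e where "e = eta_vec n1 @\<^sub>v (- eta_vec n2)"
  define v where "v = vectorize n1 \<rho>1 @\<^sub>v vectorize n2 \<rho>2"
  define Q where "Q = (\<lambda>w. e \<bullet> (U_word n Bc w *\<^sub>v v))"
  have H1c: "\<And>c. H1 c \<in> carrier_mat N1 N1" by (simp add: H1_def N1_def)
  have H2c: "\<And>c. H2 c \<in> carrier_mat N2 N2" by (simp add: H2_def N2_def)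
  have Bcc: "\<And>c. Bc c \<in> carrier_mat n n" using nN H1c H2c by (simp add: Bc_def)
  have Bw: "\<And>w. U_word n Bc w = four_block_mat (U_word N1 H1 w) (0\<^sub>m N1 N2) (0\<^sub>m N2 N1) (U_word N2 H2 w)"
    using block_UW[OF H1c H2c] nN by (simp add: Bc_def)
  have Bwc: "\<And>w. U_word n Bc w \<in> carrier_mat n n" by (rule UW_carrier) (use Bcc in auto)
  have ec: "e \<in> carrier_vec n" using nN by (simp add: e_def N1_def N2_def)
  have vc: "v \<in> carrier_vec n" using nN by (simp add: v_def N1_def N2_def)
  have cv: "eta_vec n1 \<in> carrier_vec N1" "eta_vec n2 \<in> carrier_vec N2" "vectorize n1 \<rho>1 \<in> carrier_vec N1" "vectorize n2 \<rho>2 \<in> carrier_vec N2"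
    by (simp_all add: N1_def N2_def)
  have Qw: "\<And>w. Q w = eta_vec n1 \<bullet> (U_word N1 H1 w *\<^sub>v vectorize n1 \<rho>1) - eta_vec n2 \<bullet> (U_word N2 H2 w *\<^sub>v vectorize n2 \<rho>2)"
  proof -
    fix w
    have a: "U_word N1 H1 w \<in> carrier_mat N1 N1" by (rule UW_carrier) (use H1c in auto)
    have b: "U_word N2 H2 w \<in> carrier_mat N2 N2" by (rule UW_carrier) (use H2c in auto)
    have "Q w = (eta_vec n1 @\<^sub>v (- eta_vec n2)) \<bullet> (U_word N1 H1 w *\<^sub>v vectorize n1 \<rho>1 @\<^sub>v U_word N2 H2 w *\<^sub>v vectorize n2 \<rho>2)"
      unfolding Q_def Bw e_def v_def
      by (subst mult_mat_vec_split[OF a b]) (simp_all add: N1_def N2_def)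
    also have "\<dots> = eta_vec n1 \<bullet> (U_word N1 H1 w *\<^sub>v vectorize n1 \<rho>1) + (- eta_vec n2) \<bullet> (U_word N2 H2 w *\<^sub>v vectorize n2 \<rho>2)"
      by (rule scalar_prod_append[where ?n1.0=N1 and ?n2.0=N2]) (use a b cv in auto)
    also have "\<dots> = eta_vec n1 \<bullet> (U_word N1 H1 w *\<^sub>v vectorize n1 \<rho>1) - eta_vec n2 \<bullet> (U_word N2 H2 w *\<^sub>v vectorize n2 \<rho>2)"
      using b cv by simp
    finally show "Q w = eta_vec n1 \<bullet> (U_word N1 H1 w *\<^sub>v vectorize n1 \<rho>1) - eta_vec n2 \<bullet> (U_word N2 H2 w *\<^sub>v vectorize n2 \<rho>2)" .
  qed
  have PrQ: "\<And>a S b. a \<in> lists Sig \<Longrightarrow> b \<in> lists Gam \<Longrightarrow>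
      Pr_QMM n1 U1 M1 \<rho>1 b a S - Pr_QMM n2 U2 M2 \<rho>2 b a S = Q (wordof a S b)"
  proof -
    fix a S b assume ab: "a \<in> lists Sig" "b \<in> lists Gam"
    let ?w = "wordof a S b"
    have wl: "?w \<in> lists Alph" using wordof_lists[OF ab] by (simp add: Alph_def)
    have o1: "\<And>c. c \<in> set ?w \<Longrightarrow> opL U1 M1 c \<in> carrier_mat n1 n1"
      using wl U1c M1c by (auto simp: Alph_def)
    have o2: "\<And>c. c \<in> set ?w \<Longrightarrow> opL U2 M2 c \<in> carrier_mat n2 n2"
      using wl U2c M2c by (auto simp: Alph_def)
    have V1: "V_op n1 U1 M1 b a S = U_word n1 (opL U1 M1) ?w" by (rule V_op_word[OF U1c M1c ab])
    have V2: "V_op n2 U2 M2 b a S = U_word n2 (opL U2 M2) ?w" by (rule V_op_word[OF U2c M2c ab])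
    have W1c: "U_word n1 (opL U1 M1) ?w \<in> carrier_mat n1 n1" by (rule UW_carrier) (rule o1)
    have W2c: "U_word n2 (opL U2 M2) ?w \<in> carrier_mat n2 n2" by (rule UW_carrier) (rule o2)
    have h1: "hat_mat n1 (U_word n1 (opL U1 M1) ?w) = U_word N1 H1 ?w"
      unfolding H1_def N1_def by (rule hat_UW[OF o1])
    have h2: "hat_mat n2 (U_word n2 (opL U2 M2) ?w) = U_word N2 H2 ?w"
      unfolding H2_def N2_def by (rule hat_UW[OF o2])
    have "Pr_QMM n1 U1 M1 \<rho>1 b a S = eta_vec n1 \<bullet> (U_word N1 H1 ?w *\<^sub>v vectorize n1 \<rho>1)"
      unfolding Pr_QMM_def Let_def V1
      by (subst trace_vec[OF W1c R1(1)]) (simp only: h1)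
    moreover have "Pr_QMM n2 U2 M2 \<rho>2 b a S = eta_vec n2 \<bullet> (U_word N2 H2 ?w *\<^sub>v vectorize n2 \<rho>2)"
      unfolding Pr_QMM_def Let_def V2
      by (subst trace_vec[OF W2c R2(1)]) (simp only: h2)
    ultimately show "Pr_QMM n1 U1 M1 \<rho>1 b a S - Pr_QMM n2 U2 M2 \<rho>2 b a S = Q ?w"
      by (simp add: Qw)
  qed
  have equiv: "QMM_equiv Sig Gam n1 U1 M1 \<rho>1 n2 U2 M2 \<rho>2 \<longleftrightarrow> (\<forall>w \<in> lists Alph. Q w = 0)"
  proof
    assume E: "QMM_equiv Sig Gam n1 U1 M1 \<rho>1 n2 U2 M2 \<rho>2"
    show "\<forall>w \<in> lists Alph. Q w = 0"
    proof
      fix w assume "w \<in> lists Alph"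
      then obtain a S b where abS: "a \<in> lists Sig" "is_scheduler a S" "b \<in> lists Gam" "length b = length S" "wordof a S b = w"
        using word_surj[of w Sig Gam] by (auto simp: Alph_def)
      have "Pr_QMM n1 U1 M1 \<rho>1 b a S = Pr_QMM n2 U2 M2 \<rho>2 b a S" using E abS by (auto simp: QMM_equiv_def)
      then show "Q w = 0" using PrQ[OF abS(1,3), of S] abS(5) by simp
    qed
  next
    assume Z: "\<forall>w \<in> lists Alph. Q w = 0"
    show "QMM_equiv Sig Gam n1 U1 M1 \<rho>1 n2 U2 M2 \<rho>2"
      unfolding QMM_equiv_def
    proof (intro ballI allI impI)
      fix a S b assume ab: "a \<in> lists Sig" "b \<in> lists Gam"
      have "Q (wordof a S b) = 0" using Z wordof_lists[OF ab] by (simp add: Alph_def)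
      then show "Pr_QMM n1 U1 M1 \<rho>1 b a S = Pr_QMM n2 U2 M2 \<rho>2 b a S" using PrQ[OF ab, of S] by simp
    qed
  qed
  have Bsig: "\<And>c. four_block_mat (hat_mat n1 (U1 c)) (0\<^sub>m (n1^2) (n2^2)) (0\<^sub>m (n2^2) (n1^2)) (hat_mat n2 (U2 c)) = Bc (Inl c)"
    by (simp add: Bc_def H1_def H2_def N1_def N2_def power2_eq_square)
  have Bgam: "\<And>c. four_block_mat (hat_mat n1 (M1 c)) (0\<^sub>m (n1^2) (n2^2)) (0\<^sub>m (n2^2) (n1^2)) (hat_mat n2 (M2 c)) = Bc (Inr c)"
    by (simp add: Bc_def H1_def H2_def N1_def N2_def power2_eq_square)
  have ereal: "\<And>k. k < n \<Longrightarrow> cnj (e $ k) = e $ k"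
    using nN by (simp add: e_def eta_vec_def N1_def N2_def)
  show ?thesis
    unfolding equiv Bsig Bgam e_def[symmetric] v_def[symmetric] Alph_def[symmetric]
  proof
    assume Z: "\<forall>w \<in> lists Alph. Q w = 0"
    show "\<exists>F A. F \<in> carrier_mat n n \<and> (\<forall>c\<in>Alph. A c \<in> carrier_mat n n) \<and> col F 0 = v \<and>
       dagger (mat_of_cols n [e]) * F = 0\<^sub>m 1 n \<and> (\<forall>c\<in>Sig. Bc (Inl c) * F = F * A (Inl c)) \<and>
       (\<forall>c\<in>Gam. Bc (Inr c) * F = F * A (Inr c))"
    proof -
      interpret V: vec_space "TYPE(complex)" n .
      define K where "K = {U_word n Bc w *\<^sub>v v | w. w \<in> lists Alph}"
      have Kc: "K \<subseteq> carrier_vec n" using Bwc vc by (auto simp: K_def intro!: mult_mat_vec_carrier)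
      have vK: "v \<in> K" unfolding K_def using vc by (intro CollectI exI[of _ "[]"]) simp
      have Ke: "\<And>x. x \<in> K \<Longrightarrow> e \<bullet> x = 0" using Z by (auto simp: K_def Q_def)
      have KB: "\<And>x c. x \<in> K \<Longrightarrow> c \<in> Alph \<Longrightarrow> Bc c *\<^sub>v x \<in> K"
      proof -
        fix x c assume x: "x \<in> K" and c: "c \<in> Alph"
        then obtain w where w: "w \<in> lists Alph" "x = U_word n Bc w *\<^sub>v v" by (auto simp: K_def)
        have "Bc c *\<^sub>v x = U_word n Bc (w @ [c]) *\<^sub>v v"
          unfolding w UW_snoc using Bcc Bwc vc by (metis assoc_mult_mat_vec)
        moreover have "w @ [c] \<in> lists Alph" using w c by simp
        ultimately show "Bc c *\<^sub>v x \<in> K" unfolding K_def by blast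
      qed
      have v0: "v \<noteq> 0\<^sub>v n"
      proof
        assume v0: "v = 0\<^sub>v n"
        have "vectorize n1 \<rho>1 = 0\<^sub>v N1"
        proof (rule eq_vecI)
          fix k assume k: "k < dim_vec (0\<^sub>v N1 :: complex vec)"
          then have "v $ k = vectorize n1 \<rho>1 $ k" using cv unfolding v_def by (simp add: nN)
          then show "vectorize n1 \<rho>1 $ k = 0\<^sub>v N1 $ k" using v0 k nN by simp
        qed (use cv in simp)
        then have "eta_vec n1 \<bullet> vectorize n1 \<rho>1 = 0" using cv by simp
        then show False using eta_vectorize[OF R1(1)] R1(2) by simp
      qed
      have li_v: "V.lin_indpt {v}"
      proof -
        have e0: "V.lin_indpt {}" unfolding V.lin_dep_def by auto
        have "v \<notin> V.span {}" using V.span_empty v0 by simp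
        then show ?thesis using V.lin_dep_iff_in_span[of "{}" v] e0 vc by auto
      qed
      define P where "P = (\<lambda>S. S \<subseteq> K \<and> v \<in> S \<and> V.lin_indpt S)"
      have Pb: "\<And>S. P S \<Longrightarrow> finite S \<and> card S \<le> n"
      proof -
        fix S assume "P S"
        then have "S \<subseteq> carrier_vec n" "V.lin_indpt S" using Kc by (auto simp: P_def)
        then show "finite S \<and> card S \<le> n" using V.li_le_dim[of S] V.dim_is_n by simp
      qed
      have "P {v}" using vK li_v by (simp add: P_def)
      then obtain S where fS: "finite S" and mS: "maximal S P"
        using maximal_exists[of P n "{v}"] Pb by blast
      have PS: "S \<subseteq> K" "v \<in> S" "V.lin_indpt S" using mS by (auto simp: maximal_def P_def)
      have Sc: "S \<subseteq> carrier_vec n" using PS Kc by auto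
      have KS: "K \<subseteq> V.span S"
      proof
        fix x assume xK: "x \<in> K"
        show "x \<in> V.span S"
        proof (rule ccontr)
          assume nx: "x \<notin> V.span S"
          then have "x \<notin> S" using V.span_mem[OF Sc] by auto
          then have "V.lin_indpt (S \<union> {x})" using V.lin_dep_iff_in_span[OF Sc PS(3), of x] nx xK Kc by auto
          then have "P (S \<union> {x})" using PS xK by (auto simp: P_def)
          then have "S \<union> {x} = S" using mS by (auto simp: maximal_def)
          then show False using \<open>x \<notin> S\<close> by auto
        qed
      qed
      obtain xs where xs: "set xs = S - {v}" "distinct xs"
        using finite_distinct_list[of "S - {v}"] fS by auto
      have cS: "card S \<ge> 1" "card S \<le> n" using fS PS(2) Pb[of S] mS
        by (auto simp: maximal_def card_gt_0_iff Suc_le_eq)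
      have lxs: "length xs = card S - 1" using xs fS PS(2) by (simp add: distinct_card[symmetric])
      define cs where "cs = v # xs @ replicate (n - card S) (0\<^sub>v n)"
      have lcs: "length cs = n" using lxs cS by (simp add: cs_def)
      have csK: "set cs \<subseteq> K \<union> {0\<^sub>v n}" using xs PS vK by (auto simp: cs_def)
      have csc: "set cs \<subseteq> carrier_vec n" using csK Kc by auto
      define F where "F = mat_of_cols n cs"
      have Fc: "F \<in> carrier_mat n n" by (metis F_def lcs mat_of_cols_carrier(1))
      have colF: "\<And>j. j < n \<Longrightarrow> col F j = cs ! j"
        unfolding F_def using lcs csc by (intro col_mat_of_cols) (auto dest: nth_mem)
      have colK: "\<And>j. j < n \<Longrightarrow> col F j \<in> K \<union> {0\<^sub>v n}" using colF csK lcs by (metis nth_mem subsetD)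
      have colsF: "set (cols F) = set cs" using csc by (simp add: F_def)
      have KsF: "K \<subseteq> V.span (set (cols F))"
      proof -
        have "S \<subseteq> set cs" using xs PS(2) by (auto simp: cs_def)
        then have "V.span S \<subseteq> V.span (set cs)" by (rule V.span_is_monotone)
        then show ?thesis using KS colsF by auto
      qed
      have cspace: "\<And>y. y \<in> V.span (set (cols F)) \<Longrightarrow> \<exists>x\<in>carrier_vec n. F *\<^sub>v x = y"
        using V.col_space_eq[OF Fc] Fc unfolding V.col_space_def by auto
      have Bcol: "\<And>c j. c \<in> Alph \<Longrightarrow> j < n \<Longrightarrow> \<exists>x\<in>carrier_vec n. F *\<^sub>v x = Bc c *\<^sub>v col F j"
      proof -
        fix c j assume c: "c \<in> Alph" and j: "j < n"
        have "Bc c *\<^sub>v col F j \<in> V.span (set (cols F))"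
        proof (cases "col F j \<in> K")
          case True
          have "Bc c *\<^sub>v col F j \<in> K" by (rule KB[OF True c])
          then show ?thesis using KsF by blast
        next
          case False
          then have cz: "col F j = 0\<^sub>v n" using colK[OF j] by blast
          have "Bc c *\<^sub>v 0\<^sub>v n = 0\<^sub>v n" using Bcc[of c] by auto
          moreover have "0\<^sub>v n \<in> V.span (set (cols F))" by (rule V.span_zero)
          ultimately show ?thesis unfolding cz by simp
        qed
        then show "\<exists>x\<in>carrier_vec n. F *\<^sub>v x = Bc c *\<^sub>v col F j" by (rule cspace)
      qed
      define A where "A = (\<lambda>c. mat_of_cols n (map (\<lambda>j. SOME x. x \<in> carrier_vec n \<and> F *\<^sub>v x = Bc c *\<^sub>v col F j) [0..<n]))"
      have Acar: "\<And>c. A c \<in> carrier_mat n n" unfolding A_def by (rule moc_carrier)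
      have FA: "\<And>c. c \<in> Alph \<Longrightarrow> Bc c * F = F * A c"
      proof -
        fix c assume c: "c \<in> Alph"
        define fc where "fc = (\<lambda>j. SOME x. x \<in> carrier_vec n \<and> F *\<^sub>v x = Bc c *\<^sub>v col F j)"
        have Ac: "A c = mat_of_cols n (map fc [0..<n])" by (simp add: A_def fc_def)
        have d1: "dim_row (Bc c * F) = n" "dim_col (Bc c * F) = n" using Bcc[of c] Fc by auto
        have d2: "dim_row (F * A c) = n" "dim_col (F * A c) = n" using Acar[of c] Fc by auto
        show "Bc c * F = F * A c"
        proof (rule mat_col_eqI)
          fix i assume "i < dim_col (F * A c)"
          then have i: "i < n" using d2 by simp
          have x: "fc i \<in> carrier_vec n \<and> F *\<^sub>v fc i = Bc c *\<^sub>v col F i"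
            unfolding fc_def by (rule someI_ex) (use Bcol[OF c i] in blast)
          have li: "i < length (map fc [0..<n])" using i by simp
          have mi: "map fc [0..<n] ! i = fc i" using i by simp
          have "col (A c) i = map fc [0..<n] ! i" unfolding Ac
            by (rule col_mat_of_cols[OF li]) (use mi x in simp)
          then have "col (A c) i = fc i" using mi by simp
          then have "col (F * A c) i = Bc c *\<^sub>v col F i" using x col_mult2[OF Fc Acar i] by simp
          then show "col (Bc c * F) i = col (F * A c) i" using col_mult2[OF Bcc Fc i] by simp
        next
          show "dim_row (Bc c * F) = dim_row (F * A c)" using d1 d2 by simp
          show "dim_col (Bc c * F) = dim_col (F * A c)" using d1 d2 by simp
        qed
      qed
      have F0: "col F 0 = v" using colF[OF npos] by (simp add: cs_def)
      have Fe: "dagger (mat_of_cols n [e]) * F = 0\<^sub>m 1 n"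
      proof -
        have "\<forall>j<n. e \<bullet> col F j = 0"
        proof (intro allI impI)
          fix j assume j: "j < n"
          show "e \<bullet> col F j = 0" using colK[OF j] Ke ec by auto
        qed
        then show ?thesis using dagger_row_zero[OF ec ereal Fc] by simp
      qed
      show ?thesis
        apply (rule exI[of _ F], rule exI[of _ A])
        using Fc Acar F0 Fe FA by (auto simp: Alph_def)
    qed
  next
    assume "\<exists>F A. F \<in> carrier_mat n n \<and> (\<forall>c\<in>Alph. A c \<in> carrier_mat n n) \<and> col F 0 = v \<and>
       dagger (mat_of_cols n [e]) * F = 0\<^sub>m 1 n \<and> (\<forall>c\<in>Sig. Bc (Inl c) * F = F * A (Inl c)) \<and>
       (\<forall>c\<in>Gam. Bc (Inr c) * F = F * A (Inr c))"
    then obtain F A where F: "F \<in> carrier_mat n n" and Ac: "\<forall>c\<in>Alph. A c \<in> carrier_mat n n"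
      and F0: "col F 0 = v" and Fe: "dagger (mat_of_cols n [e]) * F = 0\<^sub>m 1 n"
      and FS: "\<forall>c\<in>Sig. Bc (Inl c) * F = F * A (Inl c)" and FG: "\<forall>c\<in>Gam. Bc (Inr c) * F = F * A (Inr c)"
      by blast
    have FA: "\<And>c. c \<in> Alph \<Longrightarrow> Bc c * F = F * A c" using FS FG by (auto simp: Alph_def)
    have ecol: "\<forall>j<n. e \<bullet> col F j = 0" using dagger_row_zero[OF ec ereal F] Fe by simp
    have ind: "\<And>w. w \<in> lists Alph \<Longrightarrow> U_word n Bc w * F = F * U_word n A w \<and> U_word n A w \<in> carrier_mat n n"
    proof -
      fix w show "w \<in> lists Alph \<Longrightarrow> U_word n Bc w * F = F * U_word n A w \<and> U_word n A w \<in> carrier_mat n n"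
      proof (induction w rule: rev_induct)
        case Nil then show ?case using F by simp
      next
        case (snoc c w)
        then have c: "c \<in> Alph" and IH: "U_word n Bc w * F = F * U_word n A w" "U_word n A w \<in> carrier_mat n n" by auto
        have Acc: "A c \<in> carrier_mat n n" using Ac c by auto
        have "U_word n Bc (w @ [c]) * F = Bc c * (U_word n Bc w * F)"
          unfolding UW_snoc using Bcc Bwc F by (metis assoc_mult_mat)
        also have "\<dots> = (Bc c * F) * U_word n A w" unfolding IH(1) using Bcc F IH(2) by (metis assoc_mult_mat)
        also have "\<dots> = F * (A c * U_word n A w)" unfolding FA[OF c] using Acc F IH(2) by (metis assoc_mult_mat)
        finally show ?case using Acc IH(2) by (simp add: UW_snoc)
      qed
    qed
    show "\<forall>w \<in> lists Alph. Q w = 0"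
    proof
      fix w assume w: "w \<in> lists Alph"
      have "U_word n Bc w *\<^sub>v v = col (U_word n Bc w * F) 0"
        using col_mult2[OF Bwc F npos] F0 by simp
      also have "\<dots> = F *\<^sub>v col (U_word n A w) 0"
        using ind[OF w] col_mult2[OF F _ npos, of "U_word n A w"] by simp
      finally show "Q w = 0" unfolding Q_def
        using scalar_zero_cols[OF ec F _ ecol] ind[OF w] npos by simp
    qed
  qed
qed


end
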